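(* For every integer $d\ge 2$, $\lambda(d,2^{d-2})\ge 1-\dfrac{1}{3^{d-1}}$.
   Context: A $d$-subcube of $\{0,1\}^n$ is a set $C\subseteq\{0,1\}^n$ obtained by fixing $n-d$ coordinates to constant values and letting the remaining $d$ coordinates vary arbitrarily; there are $\binom nd 2^{n-d}$ of them. For integers $0\le s\le 2^d$ and $S\subseteq\{0,1\}^n$, let $\Lambda(S,d,s)$ be the number of $d$-subcubes $C$ with $|S\cap C|=s$, let $\Lambda(n,d,s)=\max\{\Lambda(S,d,s): S\subseteq\{0,1\}^n\}$ for $n\ge d$, and let $\lambda(d,s)=\lim_{n\to\infty}\Lambda(n,d,s)/\big(\binom nd 2^{n-d}\big)$ (the limit exists since the ratio is non-increasing in $n$). *)

theory Defs
  imports Complex_Main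
begin

text \<open>A point of the hypercube {0,1}^n is encoded as the set of coordinates
(in {0..<n}) equal to 1; so the cube is Pow {..<n}.\<close>

definition hypercube :: "nat \<Rightarrow> nat set set" where
  "hypercube n = Pow {..<n}"

text \<open>The d-subcube with free coordinate set F (card F = d) and fixed values
given by a \<subseteq> {..<n} - F (coordinate i fixed to 1 iff i \<in> a).\<close>

definition subcube :: "nat \<Rightarrow> nat set \<Rightarrow> nat set \<Rightarrow> nat set set" where
  "subcube n F a = {x \<in> hypercube n. x - F = a}"

definition subcubes :: "nat \<Rightarrow> nat \<Rightarrow> nat set set set" where
  "subcubes n d = {subcube n F a | F a. F \<subseteq> {..<n} \<and> card F = d \<and> a \<subseteq> {..<n} - F}"

definition LambdaS :: "nat \<Rightarrow> nat set set \<Rightarrow> nat \<Rightarrow> nat \<Rightarrow> nat" where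
  "LambdaS n S d s = card {C \<in> subcubes n d. card (S \<inter> C) = s}"

definition LambdaN :: "nat \<Rightarrow> nat \<Rightarrow> nat \<Rightarrow> nat" where
  "LambdaN n d s = Max {LambdaS n S d s | S. S \<subseteq> hypercube n}"

definition lambda_dens :: "nat \<Rightarrow> nat \<Rightarrow> real" where
  "lambda_dens d s =
     lim (\<lambda>n. real (LambdaN (n + d) d s) / (real ((n + d) choose d) * 2 ^ n))"

end

theory Submission
  imports Defs
begin

definition rmv :: "nat \<Rightarrow> nat set \<Rightarrow> nat set" where
  "rmv i x = {j. if j < i then j \<in> x else Suc j \<in> x}"

definition insc :: "nat \<Rightarrow> bool \<Rightarrow> nat set \<Rightarrow> nat set" where
  "insc i b y = {j. if j < i then j \<in> y else if j = i then b else j - 1 \<in> y}"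

definition facet :: "nat \<Rightarrow> bool \<Rightarrow> nat set set" where
  "facet i b = {x. (i \<in> x) = b}"

lemma rmv_insc: "rmv i (insc i b y) = y"
  unfolding rmv_def insc_def by auto

lemma insc_rmv: "(i \<in> x) = b \<Longrightarrow> insc i b (rmv i x) = x"
  unfolding rmv_def insc_def
proof (intro set_eqI)
  fix j assume "(i \<in> x) = b"
  then show "j \<in> {j. if j < i then j \<in> {j. if j < i then j \<in> x else Suc j \<in> x}
         else if j = i then b else j - 1 \<in> {j. if j < i then j \<in> x else Suc j \<in> x}} \<longleftrightarrow> j \<in> x"
    by (cases "j < i"; cases "j = i"; auto)
qed

lemma inj_rmv: "inj_on (rmv i) (facet i b)"
proof (rule inj_onI)
  fix x y assume "x \<in> facet i b" "y \<in> facet i b" "rmv i x = rmv i y"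
  then have h1: "(i \<in> x) = b" and h2: "(i \<in> y) = b" unfolding facet_def by auto
  have "insc i b (rmv i x) = x" using h1 by (rule insc_rmv)
  moreover have "insc i b (rmv i y) = y" using h2 by (rule insc_rmv)
  ultimately show "x = y" using \<open>rmv i x = rmv i y\<close> by metis
qed

lemma rmv_sub: "x \<subseteq> {..<Suc N} \<Longrightarrow> i < Suc N \<Longrightarrow> rmv i x \<subseteq> {..<N}"
  unfolding rmv_def by auto

lemma rmv_diff: "rmv i (x - F) = rmv i x - rmv i F"
  unfolding rmv_def by auto

lemma rmv_int: "rmv i (x \<inter> F) = rmv i x \<inter> rmv i F"
  unfolding rmv_def by auto

lemma rmv_empty: "rmv i {} = {}"
  unfolding rmv_def by auto

lemma insc_sub: "y \<subseteq> {..<N} \<Longrightarrow> i < Suc N \<Longrightarrow> insc i b y \<subseteq> {..<Suc N}"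
  unfolding insc_def by auto

lemma rmv_image: "i \<notin> F \<Longrightarrow> rmv i F = (\<lambda>j. if j < i then j else j - 1) ` F"
proof (intro set_eqI iffI)
  fix j assume "i \<notin> F" "j \<in> rmv i F"
  then show "j \<in> (\<lambda>j. if j < i then j else j - 1) ` F"
    unfolding rmv_def image_iff
    by (cases "j < i") (auto intro: bexI[of _ "Suc j"] bexI[of _ j])
next
  fix j assume "i \<notin> F" "j \<in> (\<lambda>j. if j < i then j else j - 1) ` F"
  then obtain k where k: "k \<in> F" "j = (if k < i then k else k - 1)" by auto
  show "j \<in> rmv i F"
  proof (cases "k < i")
    case True then show ?thesis using k unfolding rmv_def by auto
  next
    case False
    then have "k > i" using k \<open>i \<notin> F\<close> by (cases "k = i") auto
    then show ?thesis using k False unfolding rmv_def by auto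
  qed
qed


lemma rmv_subcube:
  assumes "a \<subseteq> {..<Suc N} - F" "i < Suc N" "i \<notin> F"
  shows "rmv i ` subcube (Suc N) F a = subcube N (rmv i F) (rmv i a)"
proof (intro equalityI subsetI)
  fix y assume "y \<in> rmv i ` subcube (Suc N) F a"
  then obtain x where x: "x \<subseteq> {..<Suc N}" "x - F = a" "y = rmv i x"
    unfolding subcube_def hypercube_def by auto
  then show "y \<in> subcube N (rmv i F) (rmv i a)"
    unfolding subcube_def hypercube_def using rmv_sub[OF x(1) assms(2)] rmv_diff by auto
next
  fix y assume "y \<in> subcube N (rmv i F) (rmv i a)"
  then have y: "y \<subseteq> {..<N}" "y - rmv i F = rmv i a" unfolding subcube_def hypercube_def by auto
  define x where "x = insc i (i \<in> a) y"
  have "rmv i x = y" unfolding x_def by (rule rmv_insc)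
  moreover have "x \<subseteq> {..<Suc N}" unfolding x_def using insc_sub[OF y(1) assms(2)] .
  moreover have "x - F = a"
  proof (intro set_eqI)
    fix j
    have yj: "(k \<in> y \<and> k \<notin> rmv i F) = (k \<in> rmv i a)" for k using y(2) by blast
    show "j \<in> x - F \<longleftrightarrow> j \<in> a"
    proof (cases "j < i")
      case True
      then have "j \<in> x \<longleftrightarrow> j \<in> y" "j \<in> rmv i F \<longleftrightarrow> j \<in> F" "j \<in> rmv i a \<longleftrightarrow> j \<in> a"
        unfolding x_def insc_def rmv_def by auto
      then show ?thesis using yj[of j] by auto
    next
      case False
      show ?thesis
      proof (cases "j = i")
        case True then show ?thesis using assms(3) unfolding x_def insc_def by auto
      next
        case False2: False
        then have j: "\<not> j - 1 < i" "Suc (j - 1) = j" "\<not> j < i" "j \<noteq> i" using False by auto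
        then have "j \<in> x \<longleftrightarrow> j - 1 \<in> y" "j - 1 \<in> rmv i F \<longleftrightarrow> j \<in> F" "j - 1 \<in> rmv i a \<longleftrightarrow> j \<in> a"
          unfolding x_def insc_def rmv_def by auto
        then show ?thesis using yj[of "j-1"] by auto
      qed
    qed
  qed
  ultimately show "y \<in> rmv i ` subcube (Suc N) F a"
    by (intro image_eqI[of _ _ x]) (auto simp: subcube_def hypercube_def)
qed

lemma subcube_facet:
  assumes "F \<subseteq> {..<M}" "a \<subseteq> {..<M} - F" "i < M"
  shows "subcube M F a \<subseteq> facet i b \<longleftrightarrow> i \<notin> F \<and> b = (i \<in> a)"
proof
  assume h: "subcube M F a \<subseteq> facet i b"
  have "a \<in> subcube M F a" using assms unfolding subcube_def hypercube_def by auto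
  then have ba: "b = (i \<in> a)" using h unfolding facet_def by auto
  moreover have "i \<notin> F"
  proof
    assume "i \<in> F"
    then have "insert i a \<in> subcube M F a" using assms unfolding subcube_def hypercube_def by auto
    then have "b" using h unfolding facet_def by auto
    then show False using ba assms(2) \<open>i \<in> F\<close> by auto
  qed
  ultimately show "i \<notin> F \<and> b = (i \<in> a)" by simp
next
  assume "i \<notin> F \<and> b = (i \<in> a)"
  then show "subcube M F a \<subseteq> facet i b" unfolding subcube_def facet_def by auto
qed

lemma subcube_Inter:
  assumes "a \<subseteq> {..<M} - F" "F \<subseteq> {..<M}"
  shows "\<Inter>(subcube M F a) = a"
proof -
  have "a \<in> subcube M F a" using assms unfolding subcube_def hypercube_def by auto
  moreover have "\<And>x. x \<in> subcube M F a \<Longrightarrow> a \<subseteq> x" unfolding subcube_def by auto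
  ultimately show ?thesis by blast
qed

lemma subcube_Union:
  assumes "a \<subseteq> {..<M} - F" "F \<subseteq> {..<M}"
  shows "\<Union>(subcube M F a) = a \<union> F"
proof -
  have "a \<union> F \<in> subcube M F a" using assms unfolding subcube_def hypercube_def by auto
  moreover have "\<And>x. x \<in> subcube M F a \<Longrightarrow> x \<subseteq> a \<union> F" unfolding subcube_def by auto
  ultimately show ?thesis by blast
qed

lemma subcube_inj:
  assumes "a \<subseteq> {..<M} - F" "F \<subseteq> {..<M}" "a' \<subseteq> {..<M} - F'" "F' \<subseteq> {..<M}"
    and "subcube M F a = subcube M F' a'"
  shows "F = F' \<and> a = a'"
proof -
  have "a = a'" using subcube_Inter[OF assms(1,2)] subcube_Inter[OF assms(3,4)] assms(5) by simp
  moreover have "a \<union> F = a' \<union> F'" using subcube_Union[OF assms(1,2)] subcube_Union[OF assms(3,4)] assms(5) by simp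
  ultimately show ?thesis using assms(1,3) by blast
qed

lemma rmv_subcubes:
  assumes "F \<subseteq> {..<Suc N}" "card F = d" "a \<subseteq> {..<Suc N} - F" "i < Suc N" "i \<notin> F"
  shows "rmv i ` subcube (Suc N) F a \<in> subcubes N d"
proof -
  have inj: "inj_on (\<lambda>j. if j < i then j else j - 1) F"
  proof (rule inj_onI)
    fix x y assume xy: "x \<in> F" "y \<in> F" "(if x < i then x else x - 1) = (if y < i then y else y - 1)"
    then have "x \<noteq> i" "y \<noteq> i" using assms(5) by auto
    then show "x = y" using xy(3) by (auto split: if_splits)
  qed
  have "card (rmv i F) = d" using rmv_image[OF assms(5)] card_image[OF inj] assms(2) by simp
  moreover have "rmv i F \<subseteq> {..<N}" using rmv_sub assms by auto
  moreover have "rmv i a \<subseteq> {..<N}" using rmv_sub[of a N i] assms by auto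
  moreover have "a \<inter> F = {}" using assms(3) by auto
  then have "rmv i a \<inter> rmv i F = {}" using rmv_int[of i a F] rmv_empty[of i] by simp
  ultimately show ?thesis unfolding subcubes_def rmv_subcube[OF assms(3,4,5)] by blast
qed

lemma finite_subcubes: "finite (subcubes n d)"
proof -
  have "subcubes n d \<subseteq> Pow (hypercube n)" unfolding subcubes_def subcube_def by auto
  moreover have "finite (hypercube n)" unfolding hypercube_def by simp
  ultimately show ?thesis by (meson finite_Pow_iff finite_subset)
qed

lemma LambdaN_set: "{LambdaS n S d s | S. S \<subseteq> hypercube n} = (\<lambda>S. LambdaS n S d s) ` Pow (hypercube n)"
  by auto

lemma LambdaS_le_N: "S \<subseteq> hypercube n \<Longrightarrow> LambdaS n S d s \<le> LambdaN n d s"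
  unfolding LambdaN_def LambdaN_set
  by (rule Max_ge) (auto simp: hypercube_def)

lemma LambdaN_attained: "\<exists>S. S \<subseteq> hypercube n \<and> LambdaN n d s = LambdaS n S d s"
proof -
  have "LambdaN n d s \<in> (\<lambda>S. LambdaS n S d s) ` Pow (hypercube n)"
    unfolding LambdaN_def LambdaN_set by (rule Max_in) (auto simp: hypercube_def)
  then show ?thesis by auto
qed


lemma facet_count:
  assumes S: "S \<subseteq> hypercube (Suc N)" and i: "i < Suc N"
  shows "card {C \<in> {C \<in> subcubes (Suc N) d. card (S \<inter> C) = s}. C \<subseteq> facet i b} \<le> LambdaN N d s"
proof -
  define S' where "S' = rmv i ` (S \<inter> facet i b)"
  have S'sub: "S' \<subseteq> hypercube N"
  proof
    fix y assume "y \<in> S'"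
    then obtain x where "x \<in> S" "y = rmv i x" unfolding S'_def by auto
    then show "y \<in> hypercube N" using S i rmv_sub[of x N i] unfolding hypercube_def by auto
  qed
  let ?G = "{C \<in> {C \<in> subcubes (Suc N) d. card (S \<inter> C) = s}. C \<subseteq> facet i b}"
  let ?H = "{C \<in> subcubes N d. card (S' \<inter> C) = s}"
  have inj: "inj_on (\<lambda>C. rmv i ` C) ?G"
  proof (rule inj_onI)
    fix C1 C2 assume "C1 \<in> ?G" "C2 \<in> ?G" "rmv i ` C1 = rmv i ` C2"
    then show "C1 = C2" using inj_on_image_eq_iff[OF inj_rmv[of i b], of C1 C2] by auto
  qed
  have img: "(\<lambda>C. rmv i ` C) ` ?G \<subseteq> ?H"
  proof
    fix C' assume "C' \<in> (\<lambda>C. rmv i ` C) ` ?G"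
    then obtain C where C: "C \<in> subcubes (Suc N) d" "card (S \<inter> C) = s" "C \<subseteq> facet i b"
      and C': "C' = rmv i ` C" by auto
    from C(1) obtain F a where Fa: "C = subcube (Suc N) F a" "F \<subseteq> {..<Suc N}" "card F = d"
      "a \<subseteq> {..<Suc N} - F" unfolding subcubes_def by auto
    have iF: "i \<notin> F" using subcube_facet[OF Fa(2) Fa(4) i] C(3) Fa(1) by auto
    have "C' \<in> subcubes N d" using rmv_subcubes[OF Fa(2,3,4) i iF] C' Fa(1) by simp
    moreover have "S' \<inter> C' = rmv i ` (S \<inter> C)"
      unfolding S'_def C' using inj_on_image_Int[OF inj_rmv[of i b], of "S \<inter> facet i b" C] C(3)
      by (metis Int_assoc Int_lower2 inf.absorb_iff2)
    moreover have "card (rmv i ` (S \<inter> C)) = card (S \<inter> C)"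
      by (rule card_image) (meson C(3) inj_on_subset inj_rmv le_infI2)
    ultimately show "C' \<in> ?H" using C(2) by simp
  qed
  have "card ?G = card ((\<lambda>C. rmv i ` C) ` ?G)" using card_image[OF inj] by simp
  also have "\<dots> \<le> card ?H" by (rule card_mono[OF _ img]) (simp add: finite_subcubes)
  also have "\<dots> \<le> LambdaN N d s" using LambdaS_le_N[OF S'sub] unfolding LambdaS_def by simp
  finally show ?thesis .
qed

lemma card_filter_sum: "finite A \<Longrightarrow> card {x \<in> A. P x} = (\<Sum>x\<in>A. if P x then 1 else 0)"
  by (simp add: sum.If_cases Int_def conj_commute)

lemma double_count:
  assumes G: "G \<subseteq> subcubes M d"
  shows "(\<Sum>i<M. card {C \<in> G. C \<subseteq> facet i True} + card {C \<in> G. C \<subseteq> facet i False}) = (M - d) * card G"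
proof -
  have fin: "finite G" using G finite_subcubes finite_subset by blast
  have "(\<Sum>i<M. card {C \<in> G. C \<subseteq> facet i True} + card {C \<in> G. C \<subseteq> facet i False})
      = (\<Sum>i<M. \<Sum>C\<in>G. (if C \<subseteq> facet i True then 1 else 0) + (if C \<subseteq> facet i False then 1 else 0))"
    using fin by (simp add: card_filter_sum sum.distrib)
  also have "\<dots> = (\<Sum>C\<in>G. \<Sum>i<M. (if C \<subseteq> facet i True then 1 else 0) + (if C \<subseteq> facet i False then 1 else 0))"
    by (rule sum.swap)
  also have "\<dots> = (\<Sum>C\<in>G. M - d)"
  proof (rule sum.cong[OF refl])
    fix C assume "C \<in> G"
    then obtain F a where Fa: "C = subcube M F a" "F \<subseteq> {..<M}" "card F = d"
      "a \<subseteq> {..<M} - F" using G unfolding subcubes_def by auto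
    have "(\<Sum>i<M. (if C \<subseteq> facet i True then 1 else 0) + (if C \<subseteq> facet i False then 1 else 0))
        = (\<Sum>i<M. (if i \<notin> F then 1 else 0 :: nat))"
    proof (rule sum.cong[OF refl])
      fix i assume "i \<in> {..<M}"
      then have "i < M" by simp
      then show "(if C \<subseteq> facet i True then 1 else 0) + (if C \<subseteq> facet i False then 1 else 0)
          = (if i \<notin> F then 1 else 0 :: nat)"
        using subcube_facet[OF Fa(2) Fa(4), of i] Fa(1) by auto
    qed
    also have "\<dots> = card {i \<in> {..<M}. i \<notin> F}" by (rule card_filter_sum[symmetric]) simp
    also have "{i \<in> {..<M}. i \<notin> F} = {..<M} - F" by auto
    also have "card ({..<M} - F) = M - d" using Fa(2,3) by (simp add: card_Diff_subset finite_subset)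
    finally show "(\<Sum>i<M. (if C \<subseteq> facet i True then 1 else 0) + (if C \<subseteq> facet i False then 1 else 0)) = M - d" .
  qed
  also have "\<dots> = (M - d) * card G" by simp
  finally show ?thesis .
qed

lemma LambdaN_step: "(Suc N - d) * LambdaN (Suc N) d s \<le> 2 * Suc N * LambdaN N d s"
proof -
  obtain S where S: "S \<subseteq> hypercube (Suc N)" "LambdaN (Suc N) d s = LambdaS (Suc N) S d s"
    using LambdaN_attained by blast
  let ?G = "{C \<in> subcubes (Suc N) d. card (S \<inter> C) = s}"
  have "(Suc N - d) * LambdaN (Suc N) d s = (Suc N - d) * card ?G" using S(2) unfolding LambdaS_def by simp
  also have "\<dots> = (\<Sum>i<Suc N. card {C \<in> ?G. C \<subseteq> facet i True} + card {C \<in> ?G. C \<subseteq> facet i False})"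
    by (rule double_count[symmetric]) auto
  also have "\<dots> \<le> (\<Sum>i<Suc N. LambdaN N d s + LambdaN N d s)"
    by (rule sum_mono) (intro add_mono facet_count[OF S(1)]; simp)
  also have "\<dots> = 2 * Suc N * LambdaN N d s" by simp
  finally show ?thesis .
qed


definition tog :: "nat \<Rightarrow> nat set \<Rightarrow> nat set" where
  "tog u y = (if u \<in> y then y - {u} else insert u y)"

lemma tog_tog: "tog u (tog u y) = y"
  unfolding tog_def by auto

lemma even_tog:
  assumes "finite P"
  shows "even (card (tog u y \<inter> P)) = (even (card (y \<inter> P)) \<noteq> (u \<in> P))"
proof (cases "u \<in> P")
  case True
  show ?thesis
  proof (cases "u \<in> y")
    case True2: True
    have "tog u y \<inter> P = (y \<inter> P) - {u}" unfolding tog_def using True2 by auto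
    moreover have "card (y \<inter> P) \<ge> 1" using True True2 assms
      by (metis IntI card_0_eq finite_Int empty_iff less_one not_le)
    ultimately show ?thesis using True True2 assms by auto
  next
    case False2: False
    have "tog u y \<inter> P = insert u (y \<inter> P)" unfolding tog_def using False2 True by auto
    then show ?thesis using True False2 assms by auto
  qed
next
  case False
  then have "tog u y \<inter> P = y \<inter> P" unfolding tog_def by auto
  then show ?thesis using False by simp
qed

definition cnt :: "nat set \<Rightarrow> nat set \<Rightarrow> nat set \<Rightarrow> bool \<Rightarrow> bool \<Rightarrow> nat" where
  "cnt F P Q p q = card {y \<in> Pow F. even (card (y \<inter> P)) = p \<and> even (card (y \<inter> Q)) = q}"

lemma cnt_le:
  assumes "finite F" "P \<subseteq> F" "Q \<subseteq> F" "u \<in> F"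
  shows "cnt F P Q p q \<le> cnt F P Q (p \<noteq> (u \<in> P)) (q \<noteq> (u \<in> Q))"
proof -
  let ?X = "{y \<in> Pow F. even (card (y \<inter> P)) = p \<and> even (card (y \<inter> Q)) = q}"
  let ?Y = "{y \<in> Pow F. even (card (y \<inter> P)) = (p \<noteq> (u \<in> P)) \<and> even (card (y \<inter> Q)) = (q \<noteq> (u \<in> Q))}"
  have fP: "finite P" "finite Q" using assms finite_subset by auto
  have inj: "inj_on (tog u) ?X"
  proof (rule inj_onI)
    fix x y assume "tog u x = tog u y"
    then have "tog u (tog u x) = tog u (tog u y)" by simp
    then show "x = y" by (simp only: tog_tog)
  qed
  have "tog u ` ?X \<subseteq> ?Y"
  proof
    fix z assume "z \<in> tog u ` ?X"
    then obtain y where y: "y \<in> ?X" "z = tog u y" by auto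
    have "z \<subseteq> F" using y assms(4) unfolding tog_def by auto
    moreover have "even (card (z \<inter> P)) = (p \<noteq> (u \<in> P))"
      using y(1) unfolding y(2) even_tog[OF fP(1), of u y] by simp
    moreover have "even (card (z \<inter> Q)) = (q \<noteq> (u \<in> Q))"
      using y(1) unfolding y(2) even_tog[OF fP(2), of u y] by simp
    ultimately show "z \<in> ?Y" by simp
  qed
  then have "card (tog u ` ?X) \<le> card ?Y" by (intro card_mono) (auto simp: assms(1))
  then show ?thesis unfolding cnt_def using card_image[OF inj] by simp
qed

lemma cnt_eq:
  assumes "finite F" "P \<subseteq> F" "Q \<subseteq> F" "u \<in> F"
  shows "cnt F P Q p q = cnt F P Q (p \<noteq> (u \<in> P)) (q \<noteq> (u \<in> Q))"
proof -
  have "((p \<noteq> (u \<in> P)) \<noteq> (u \<in> P)) = p" "((q \<noteq> (u \<in> Q)) \<noteq> (u \<in> Q)) = q" by auto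
  then have "cnt F P Q (p \<noteq> (u \<in> P)) (q \<noteq> (u \<in> Q)) \<le> cnt F P Q p q"
    using cnt_le[OF assms, of "p \<noteq> (u \<in> P)" "q \<noteq> (u \<in> Q)"] by simp
  then show ?thesis using cnt_le[OF assms, of p q] by linarith
qed

lemma card_split: "finite A \<Longrightarrow> card {x \<in> A. R x} + card {x \<in> A. \<not> R x} = card A"
proof -
  assume f: "finite A"
  have "card ({x \<in> A. R x} \<union> {x \<in> A. \<not> R x}) = card {x \<in> A. R x} + card {x \<in> A. \<not> R x}"
    by (rule card_Un_disjoint) (use f in auto)
  moreover have "{x \<in> A. R x} \<union> {x \<in> A. \<not> R x} = A" by auto
  ultimately show ?thesis by simp
qed

lemma cnt_total:
  assumes "finite F"
  shows "cnt F P Q True True + cnt F P Q True False + cnt F P Q False True + cnt F P Q False False = 2 ^ card F"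
proof -
  have fin: "finite (Pow F)" using assms by simp
  have a: "card {y \<in> Pow F. even (card (y \<inter> P)) = p} = cnt F P Q p True + cnt F P Q p False" for p
  proof -
    have "card {y \<in> {y \<in> Pow F. even (card (y \<inter> P)) = p}. even (card (y \<inter> Q))}
        + card {y \<in> {y \<in> Pow F. even (card (y \<inter> P)) = p}. \<not> even (card (y \<inter> Q))}
        = card {y \<in> Pow F. even (card (y \<inter> P)) = p}"
      by (rule card_split) (use fin in auto)
    moreover have "{y \<in> {y \<in> Pow F. even (card (y \<inter> P)) = p}. even (card (y \<inter> Q))}
      = {y \<in> Pow F. even (card (y \<inter> P)) = p \<and> even (card (y \<inter> Q)) = True}" by auto
    moreover have "{y \<in> {y \<in> Pow F. even (card (y \<inter> P)) = p}. \<not> even (card (y \<inter> Q))}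
      = {y \<in> Pow F. even (card (y \<inter> P)) = p \<and> even (card (y \<inter> Q)) = False}" by auto
    ultimately show ?thesis unfolding cnt_def by simp
  qed
  have "card {y \<in> Pow F. even (card (y \<inter> P))} + card {y \<in> Pow F. \<not> even (card (y \<inter> P))} = card (Pow F)"
    by (rule card_split[OF fin])
  moreover have "{y \<in> Pow F. even (card (y \<inter> P))} = {y \<in> Pow F. even (card (y \<inter> P)) = True}" by simp
  moreover have "{y \<in> Pow F. \<not> even (card (y \<inter> P))} = {y \<in> Pow F. even (card (y \<inter> P)) = False}" by simp
  ultimately show ?thesis using a[of True] a[of False] card_Pow[OF assms] by simp
qed

lemma cnt_sym: "cnt F P Q p q = cnt F Q P q p"
  unfolding cnt_def by (rule arg_cong[where f=card]) auto

lemma cnt_const_aux: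
  assumes "finite F" "P \<subseteq> F" "Q \<subseteq> F" "u \<in> P" "u \<notin> Q" "v \<in> Q"
  shows "cnt F P Q p q = cnt F P Q True True"
proof -
  have u: "u \<in> F" "v \<in> F" using assms by auto
  have e1: "cnt F P Q p' q' = cnt F P Q (\<not> p') q'" for p' q'
    using cnt_eq[OF assms(1-3) u(1), of p' q'] assms(4,5) by simp
  have e2: "cnt F P Q p' q' = cnt F P Q (p' \<noteq> (v \<in> P)) (\<not> q')" for p' q'
    using cnt_eq[OF assms(1-3) u(2), of p' q'] assms(6) by simp
  have t: "cnt F P Q p' True = cnt F P Q True True" for p'
    using e1[of p' True] by (cases p') auto
  show ?thesis
  proof (cases q)
    case True then show ?thesis using t by simp
  next
    case False then show ?thesis using e2[of p q] t by simp
  qed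
qed

lemma cnt_quarter:
  assumes "finite F" "P \<subseteq> F" "Q \<subseteq> F" "P \<noteq> {}" "Q \<noteq> {}" "P \<noteq> Q"
  shows "4 * cnt F P Q p q = 2 ^ card F"
proof -
  have c: "cnt F P Q p' q' = cnt F P Q p q" for p' q'
  proof (cases "\<exists>u. u \<in> P \<and> u \<notin> Q")
    case True
    then obtain u where u: "u \<in> P" "u \<notin> Q" by auto
    obtain v where v: "v \<in> Q" using assms(5) by auto
    show ?thesis using cnt_const_aux[OF assms(1-3) u v, of p' q'] cnt_const_aux[OF assms(1-3) u v, of p q] by simp
  next
    case False
    then obtain u where u: "u \<in> Q" "u \<notin> P" using assms(6) by auto
    obtain v where v: "v \<in> P" using assms(4) by auto
    show ?thesis using cnt_const_aux[OF assms(1) assms(3) assms(2) u v, of q' p'] cnt_const_aux[OF assms(1) assms(3) assms(2) u v, of q p]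
      cnt_sym[of F P Q p' q'] cnt_sym[of F P Q p q] by simp
  qed
  show ?thesis using cnt_total[OF assms(1), of P Q] c[of True True] c[of True False] c[of False True] c[of False False] by linarith
qed


definition A3 :: "nat set" where "A3 = {j. j mod 3 \<noteq> 1}"
definition B3 :: "nat set" where "B3 = {j. j mod 3 \<noteq> 0}"
definition S0 :: "nat \<Rightarrow> nat set set" where
  "S0 N = {x \<in> hypercube N. even (card (x \<inter> A3)) \<and> even (card (x \<inter> B3))}"

lemma parity_Un:
  assumes "finite a" "finite y" "a \<inter> y = {}"
  shows "even (card ((a \<union> y) \<inter> A)) = (even (card (y \<inter> A)) = even (card (a \<inter> A)))"
proof -
  have "(a \<union> y) \<inter> A = (a \<inter> A) \<union> (y \<inter> A)" by auto
  moreover have "card ((a \<inter> A) \<union> (y \<inter> A)) = card (a \<inter> A) + card (y \<inter> A)"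
    by (rule card_Un_disjoint) (use assms in auto)
  ultimately show ?thesis by auto
qed

lemma good_subcube:
  assumes F: "F \<subseteq> {..<N}" "card F = d" "d \<ge> 2" and a: "a \<subseteq> {..<N} - F"
    and P: "F \<inter> A3 \<noteq> {}" "F \<inter> B3 \<noteq> {}" "F \<inter> A3 \<noteq> F \<inter> B3"
  shows "card (S0 N \<inter> subcube N F a) = 2 ^ (d - 2)"
proof -
  have finF: "finite F" using F(1) finite_subset by blast
  have fina: "finite a" using a finite_subset by blast
  let ?p = "even (card (a \<inter> A3))" and ?q = "even (card (a \<inter> B3))"
  let ?X = "{y \<in> Pow F. even (card (y \<inter> (F \<inter> A3))) = ?p \<and> even (card (y \<inter> (F \<inter> B3))) = ?q}"
  have key: "y \<subseteq> F \<Longrightarrow> (even (card ((a \<union> y) \<inter> A3)) \<and> even (card ((a \<union> y) \<inter> B3))) =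
      (even (card (y \<inter> (F \<inter> A3))) = ?p \<and> even (card (y \<inter> (F \<inter> B3))) = ?q)" for y
  proof -
    assume y: "y \<subseteq> F"
    then have fy: "finite y" "a \<inter> y = {}" using finF finite_subset a by auto
    have "y \<inter> (F \<inter> A3) = y \<inter> A3" "y \<inter> (F \<inter> B3) = y \<inter> B3" using y by auto
    then show ?thesis using parity_Un[OF fina fy, of A3] parity_Un[OF fina fy, of B3] by simp
  qed
  have eq: "S0 N \<inter> subcube N F a = (\<lambda>y. a \<union> y) ` ?X"
  proof (intro equalityI subsetI)
    fix x assume x: "x \<in> S0 N \<inter> subcube N F a"
    then have x1: "x \<subseteq> {..<N}" "x - F = a" unfolding S0_def subcube_def hypercube_def by auto
    have xa: "x = a \<union> (x \<inter> F)" using x1 by auto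
    have "x \<inter> F \<in> ?X" using x key[of "x \<inter> F"] xa unfolding S0_def by auto
    then show "x \<in> (\<lambda>y. a \<union> y) ` ?X" using xa by blast
  next
    fix x assume "x \<in> (\<lambda>y. a \<union> y) ` ?X"
    then obtain y where y: "y \<in> ?X" "x = a \<union> y" by auto
    have "x \<subseteq> {..<N}" "x - F = a" using y a F(1) by auto
    moreover have "even (card (x \<inter> A3)) \<and> even (card (x \<inter> B3))" using key[of y] y by auto
    ultimately show "x \<in> S0 N \<inter> subcube N F a" unfolding S0_def subcube_def hypercube_def by auto
  qed
  have inj: "inj_on (\<lambda>y. a \<union> y) ?X"
  proof (rule inj_onI)
    fix y1 y2 assume "y1 \<in> ?X" "y2 \<in> ?X" "a \<union> y1 = a \<union> y2"
    then show "y1 = y2" using a by blast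
  qed
  have "card (S0 N \<inter> subcube N F a) = cnt F (F \<inter> A3) (F \<inter> B3) ?p ?q"
    unfolding eq cnt_def using card_image[OF inj] by simp
  moreover have "4 * cnt F (F \<inter> A3) (F \<inter> B3) ?p ?q = 2 ^ d"
    using cnt_quarter[OF finF _ _ P, of ?p ?q] F(2) by auto
  moreover have "(2::nat) ^ d = 4 * 2 ^ (d - 2)" using F(3)
    by (metis le_add_diff_inverse power_add power2_eq_square numeral_Bit0 mult_2 numeral_times_numeral semiring_norm(12))
  ultimately show ?thesis by simp
qed


lemma binom_Suc: "Suc k * (n choose Suc k) = (n - k) * (n choose k)"
  using binomial_absorption[of k n] binomial_absorb_comp[of n k] by simp

lemma binom_pow: "1 \<le> (k::nat) \<Longrightarrow> k ^ d * (m choose d) \<le> (k * m) choose d"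
proof (induction d)
  case 0 then show ?case by simp
next
  case (Suc d)
  have kd: "k * (m - d) \<le> k * m - d"
  proof -
    have "k * (m - d) = k * m - k * d" by (simp add: diff_mult_distrib2)
    moreover have "d \<le> k * d" using Suc.prems by simp
    ultimately show ?thesis by (simp add: diff_le_mono2)
  qed
  have "Suc d * (k ^ Suc d * (m choose Suc d)) = k * k ^ d * (Suc d * (m choose Suc d))"
    by (simp only: power_Suc mult.assoc mult.left_commute)
  also have "\<dots> = (k * (m - d)) * (k ^ d * (m choose d))"
    unfolding binom_Suc by (simp only: mult.assoc mult.left_commute)
  also have "\<dots> \<le> (k * m - d) * ((k * m) choose d)"
    by (intro mult_mono kd Suc.IH Suc.prems) auto
  also have "\<dots> = Suc d * ((k * m) choose Suc d)" using binom_Suc[of d "k * m"] by simp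
  finally show ?case by (simp only: mult_le_cancel1)
qed

definition cls :: "nat \<Rightarrow> nat \<Rightarrow> nat set" where "cls m c = {j. j < 3 * m \<and> j mod 3 = c}"

lemma card_cls: assumes "c < 3" shows "card (cls m c) = m"
proof -
  have "cls m c = (\<lambda>k. 3 * k + c) ` {..<m}"
  proof (intro equalityI subsetI)
    fix j assume "j \<in> cls m c"
    then have j: "j < 3 * m" "j mod 3 = c" unfolding cls_def by auto
    then have "j = 3 * (j div 3) + c" "j div 3 < m" by auto
    then show "j \<in> (\<lambda>k. 3 * k + c) ` {..<m}" by (metis imageI lessThan_iff)
  next
    fix j assume "j \<in> (\<lambda>k. 3 * k + c) ` {..<m}"
    then obtain k where "k < m" "j = 3 * k + c" by auto
    then show "j \<in> cls m c" unfolding cls_def using assms by auto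
  qed
  moreover have "inj_on (\<lambda>k. 3 * k + c) {..<m}" by (intro inj_onI) simp
  ultimately show ?thesis by (simp add: card_image)
qed

lemma lower_count:
  assumes d2: "d \<ge> 2"
  shows "(((3 * m) choose d) - 3 * (m choose d)) * 2 ^ (3 * m - d) \<le> LambdaN (3 * m) d (2 ^ (d - 2))"
proof -
  define N where "N = 3 * m"
  define AllF where "AllF = {F. F \<subseteq> {..<N} \<and> card F = d}"
  define Mono where "Mono = (\<Union>c\<in>{..<3::nat}. {F. F \<subseteq> cls m c \<and> card F = d})"
  define G where "G = AllF - Mono"
  have cardAll: "card AllF = N choose d" unfolding AllF_def using n_subsets[of "{..<N}" d] by simp
  have finMono: "finite Mono" unfolding Mono_def
  proof (intro finite_UN_I)
    fix c show "finite {F. F \<subseteq> cls m c \<and> card F = d}"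
      by (rule finite_subset[of _ "Pow (cls m c)"]) (auto simp: cls_def)
  qed simp
  have "card Mono \<le> (\<Sum>c<3. card {F. F \<subseteq> cls m c \<and> card F = d})"
    unfolding Mono_def by (rule card_UN_le) simp
  also have "\<dots> = (\<Sum>c<(3::nat). m choose d)"
  proof (rule sum.cong[OF refl])
    fix c assume "c \<in> {..<(3::nat)}"
    then have "card (cls m c) = m" by (intro card_cls) simp
    moreover have "finite (cls m c)" by (auto simp: cls_def)
    ultimately show "card {F. F \<subseteq> cls m c \<and> card F = d} = m choose d" using n_subsets[of "cls m c" d] by simp
  qed
  also have "\<dots> = 3 * (m choose d)" by simp
  finally have cardMono: "card Mono \<le> 3 * (m choose d)" .
  have cardG: "(N choose d) - 3 * (m choose d) \<le> card G"
  proof -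
    have "(N choose d) - 3 * (m choose d) \<le> card AllF - card Mono"
      unfolding cardAll using cardMono by (rule diff_le_mono2)
    then show ?thesis using diff_card_le_card_Diff[OF finMono, of AllF] unfolding G_def by linarith
  qed
  have finG: "finite G" unfolding G_def AllF_def
    by (rule finite_subset[of _ "Pow {..<N}"]) auto
  have good: "F \<inter> A3 \<noteq> {} \<and> F \<inter> B3 \<noteq> {} \<and> F \<inter> A3 \<noteq> F \<inter> B3" if F: "F \<in> G" for F
  proof -
    have F1: "F \<subseteq> {..<N}" "card F = d" "F \<notin> Mono" using F unfolding G_def AllF_def by auto
    have nm: "\<not> (\<forall>j\<in>F. j mod 3 = c)" if "c < 3" for c
    proof
      assume "\<forall>j\<in>F. j mod 3 = c"
      then have "F \<subseteq> cls m c" using F1(1) unfolding cls_def N_def by auto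
      then show False using F1 that unfolding Mono_def by auto
    qed
    have 1: "F \<inter> A3 \<noteq> {}" using nm[of 1] unfolding A3_def by auto
    have 2: "F \<inter> B3 \<noteq> {}" using nm[of 0] unfolding B3_def by auto
    have 3: "F \<inter> A3 \<noteq> F \<inter> B3"
    proof
      assume e: "F \<inter> A3 = F \<inter> B3"
      have "\<forall>j\<in>F. j mod 3 = 2"
      proof
        fix j assume "j \<in> F"
        then have "(j \<in> A3) = (j \<in> B3)" using e by blast
        then have "(j mod 3 \<noteq> 1) = (j mod 3 \<noteq> 0)" unfolding A3_def B3_def by simp
        moreover have "j mod 3 < 3" by simp
        ultimately show "j mod 3 = 2" by linarith
      qed
      then show False using nm[of 2] by simp
    qed
    show ?thesis using 1 2 3 by simp
  qed
  define Dom where "Dom = Sigma G (\<lambda>F. Pow ({..<N} - F))"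
  have "card Dom = (\<Sum>F\<in>G. card (Pow ({..<N} - F)))"
    unfolding Dom_def by (rule card_SigmaI) (auto simp: finG)
  also have "\<dots> = (\<Sum>F\<in>G. 2 ^ (N - d))"
  proof (rule sum.cong[OF refl])
    fix F assume "F \<in> G"
    then have "F \<subseteq> {..<N}" "card F = d" unfolding G_def AllF_def by auto
    then show "card (Pow ({..<N} - F)) = 2 ^ (N - d)"
      by (simp add: card_Pow card_Diff_subset finite_subset)
  qed
  also have "\<dots> = card G * 2 ^ (N - d)" by simp
  finally have cardDom: "card Dom = card G * 2 ^ (N - d)" .
  have inj: "inj_on (\<lambda>(F, a). subcube N F a) Dom"
  proof (rule inj_onI)
    fix x y assume x: "x \<in> Dom" and y: "y \<in> Dom" and e: "(\<lambda>(F, a). subcube N F a) x = (\<lambda>(F, a). subcube N F a) y"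
    obtain F a where xx: "x = (F, a)" by (cases x)
    obtain F' a' where yy: "y = (F', a')" by (cases y)
    have "F \<subseteq> {..<N}" "a \<subseteq> {..<N} - F" "F' \<subseteq> {..<N}" "a' \<subseteq> {..<N} - F'"
      using x y unfolding xx yy Dom_def G_def AllF_def by auto
    then show "x = y" using subcube_inj[of a N F a' F'] e unfolding xx yy by auto
  qed
  have img: "(\<lambda>(F, a). subcube N F a) ` Dom \<subseteq> {C \<in> subcubes N d. card (S0 N \<inter> C) = 2 ^ (d - 2)}"
  proof
    fix C assume "C \<in> (\<lambda>(F, a). subcube N F a) ` Dom"
    then obtain F a where Fa: "F \<in> G" "a \<subseteq> {..<N} - F" "C = subcube N F a"
      unfolding Dom_def by auto
    have F: "F \<subseteq> {..<N}" "card F = d" using Fa(1) unfolding G_def AllF_def by auto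
    have "C \<in> subcubes N d" unfolding subcubes_def using F Fa by auto
    moreover have "card (S0 N \<inter> C) = 2 ^ (d - 2)"
      using good_subcube[OF F d2 Fa(2)] good[OF Fa(1)] Fa(3) by simp
    ultimately show "C \<in> {C \<in> subcubes N d. card (S0 N \<inter> C) = 2 ^ (d - 2)}" by simp
  qed
  have "card Dom = card ((\<lambda>(F, a). subcube N F a) ` Dom)" using card_image[OF inj] by simp
  also have "\<dots> \<le> LambdaS N (S0 N) d (2 ^ (d - 2))"
    unfolding LambdaS_def by (rule card_mono[OF _ img]) (simp add: finite_subcubes)
  also have "\<dots> \<le> LambdaN N d (2 ^ (d - 2))" by (rule LambdaS_le_N) (auto simp: S0_def)
  finally have "card G * 2 ^ (N - d) \<le> LambdaN N d (2 ^ (d - 2))" using cardDom by simp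
  moreover have "((N choose d) - 3 * (m choose d)) * 2 ^ (N - d) \<le> card G * 2 ^ (N - d)"
    using cardG by simp
  ultimately show ?thesis unfolding N_def by linarith
qed


lemma seq_dec:
  fixes L1 L0 B1 B0 k M :: real
  assumes "k * L1 \<le> 2 * M * L0" "k * B1 = M * B0" "k > 0" "M > 0" "B0 > 0" "B1 > 0" "L1 \<ge> 0" "(p::real) > 0"
  shows "L1 / (B1 * (2 * p)) \<le> L0 / (B0 * p)"
proof -
  have "L1 * B0 = (k * L1) * B1 / M" using assms(2,4) by (simp add: field_simps)
  also have "\<dots> \<le> (2 * M * L0) * B1 / M" using assms(1,4,6)
    by (intro divide_right_mono mult_right_mono) auto
  also have "\<dots> = 2 * L0 * B1" using assms(4) by simp
  finally have "L1 * B0 \<le> 2 * L0 * B1" .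
  then show ?thesis using assms(5,6,8) by (simp add: field_simps)
qed

theorem mainTheorem4:
  fixes d :: nat
  assumes "d \<ge> 2"
  shows "lambda_dens d (2 ^ (d - 2)) \<ge> 1 - 1 / 3 ^ (d - 1)"
proof -
  define s where "s = (2::nat) ^ (d - 2)"
  define a where "a = (\<lambda>n. real (LambdaN (n + d) d s) / (real ((n + d) choose d) * 2 ^ n))"
  define c :: real where "c = 1 - 1 / 3 ^ (d - 1)"
  have dec: "a (Suc n) \<le> a n" for n
  proof -
    let ?N = "n + d"
    have step: "Suc n * LambdaN (Suc ?N) d s \<le> 2 * Suc ?N * LambdaN ?N d s"
      using LambdaN_step[of ?N d s] by simp
    have bin: "Suc n * (Suc ?N choose d) = Suc ?N * (?N choose d)"
      using binomial_absorb_comp[of "Suc ?N" d] by simp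
    have step': "real (Suc n) * real (LambdaN (Suc ?N) d s) \<le> 2 * real (Suc ?N) * real (LambdaN ?N d s)"
      using step by (metis of_nat_le_iff of_nat_mult of_nat_numeral)
    have bin': "real (Suc n) * real (Suc ?N choose d) = real (Suc ?N) * real (?N choose d)"
      using bin by (metis of_nat_mult)
    have "a (Suc n) = real (LambdaN (Suc ?N) d s) / (real (Suc ?N choose d) * (2 * 2 ^ n))"
      unfolding a_def by simp
    also have "\<dots> \<le> real (LambdaN ?N d s) / (real (?N choose d) * 2 ^ n)"
      by (rule seq_dec[OF step' bin']) auto
    also have "\<dots> = a n" unfolding a_def by simp
    finally show ?thesis .
  qed
  have decs: "decseq a" using dec by (rule decseq_SucI)
  have nonneg: "\<forall>n. 0 \<le> a n" unfolding a_def by simp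
  obtain L where L: "a \<longlonglongrightarrow> L" using decseq_convergent[OF decs nonneg] by blast
  have low: "c \<le> a (3 * n + 2 * d)" for n
  proof -
    define m where "m = n + d"
    have N: "3 * n + 2 * d + d = 3 * m" "3 * m - d = 3 * n + 2 * d" unfolding m_def by auto
    define B where "B = (3 * m) choose d"
    define C where "C = m choose d"
    have lc: "(B - 3 * C) * 2 ^ (3 * n + 2 * d) \<le> LambdaN (3 * m) d s"
      using lower_count[OF assms, of m] N unfolding B_def C_def s_def by simp
    have bp: "3 ^ d * C \<le> B" using binom_pow[of 3 d m] unfolding B_def C_def by simp
    have "3 * C \<le> 3 ^ d * C" using assms by (intro mult_right_mono) (auto simp: self_le_power)
    then have le3: "3 * C \<le> B" using bp by linarith
    have Bpos: "B > 0" unfolding B_def m_def by simp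
    have lc': "(real B - 3 * real C) * 2 ^ (3 * n + 2 * d) \<le> real (LambdaN (3 * m) d s)"
    proof -
      have "real ((B - 3 * C) * 2 ^ (3 * n + 2 * d)) \<le> real (LambdaN (3 * m) d s)"
        using lc by (metis of_nat_le_iff)
      then show ?thesis using le3 by (simp add: of_nat_diff)
    qed
    have bp': "3 ^ d * real C \<le> real B" using bp by (metis of_nat_le_iff of_nat_mult of_nat_numeral of_nat_power)
    have p3: "(3::real) ^ d = 3 * 3 ^ (d - 1)" using assms by (metis Suc_diff_1 less_le_trans pos2 power_Suc zero_less_numeral less_numeral_extra(1) order.strict_trans2)
    have "c = (real B - 3 * real B / 3 ^ d) / real B" unfolding c_def using Bpos p3 by (simp add: field_simps)
    also have "\<dots> \<le> (real B - 3 * real C) / real B"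
    proof -
      have "real C \<le> real B / 3 ^ d" using bp' by (simp add: field_simps)
      then have "3 * real C \<le> 3 * real B / 3 ^ d" by simp
      then show ?thesis using Bpos by (intro divide_right_mono) auto
    qed
    also have "\<dots> = (real B - 3 * real C) * 2 ^ (3 * n + 2 * d) / (real B * 2 ^ (3 * n + 2 * d))"
      by simp
    also have "\<dots> \<le> real (LambdaN (3 * m) d s) / (real B * 2 ^ (3 * n + 2 * d))"
      using lc' Bpos by (intro divide_right_mono) auto
    also have "\<dots> = a (3 * n + 2 * d)" unfolding a_def B_def using N(1) by simp
    finally show ?thesis .
  qed
  have "c \<le> L"
  proof (rule LIMSEQ_le_const[OF L], intro exI allI impI)
    fix n :: nat assume "0 \<le> n"
    have "a (3 * n + 2 * d) \<le> a n" using decs by (rule decseqD) simp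
    then show "c \<le> a n" using low[of n] by linarith
  qed
  moreover have "lambda_dens d (2 ^ (d - 2)) = L"
    unfolding lambda_dens_def using limI[OF L] unfolding a_def s_def by simp
  ultimately show ?thesis unfolding c_def by simp
qed

end
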